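(* Assume $\hat w=\sup_x w(x)<\infty$. Let $c(\lambda)=a+b\lambda$ with $a\ge0$, $b>0$, and define $h_1,h_2,h_3:[1,\infty)\to\mathbb{R}$ by $h_1(\lambda)=c'(\lambda)(1-\lambda^{-2})+2c(\lambda)\epsilon'(\lambda)$, $h_2(\lambda)=c'(\lambda)(1-\epsilon(\lambda)^2)+2c(\lambda)\epsilon'(\lambda)$, $h_3(\lambda)=c'(\lambda)(1-\epsilon_s(\lambda))+2c(\lambda)\epsilon'(\lambda)$. Then $h_3\le h_2\le h_1$, and for each $i\in\{1,2,3\}$, $\liminf_{\lambda\to\infty}h_i(\lambda)>0$ and $\limsup_{\lambda\to1+}h_i(\lambda)<0$.
   Context: Let $\pi,q$ be probability densities with respect to a $\sigma$-finite measure $\mu$ on $\mathbb{X}$, with $q>0$ wherever $\pi>0$; $\mathbb{S}=\{\pi>0\}$, $w=\pi/q$ on $\mathbb{S}$, $w=0$ elsewhere, $\pi(dx)=\pi(x)\mu(dx)$, $q(dx)=q(x)\mu(dx)$. For integer $N\ge1$ and $z_1\in\mathbb{S}$, the rejection probability is $\epsilon(N,z_1)=\int_{\mathbb{X}^{N-1}}\frac{w(z_1)}{\sum_{i=1}^Nw(z_i)}\prod_{n=2}^Nq(dz_n)$ and $\epsilon(N)=\int_{\mathbb{S}}\epsilon(N,z)\pi(dz)$. For real $\lambda\ge1$ with $\beta(\lambda)=\lfloor\lambda\rfloor+1-\lambda$: $\epsilon(\lambda)=\beta(\lambda)\epsilon(\lfloor\lambda\rfloor)+(1-\beta(\lambda))\epsilon(\lfloor\lambda\rfloor+1)$;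 $\epsilon'(\lambda)=\epsilon(\lfloor\lambda\rfloor+1)-\epsilon(\lfloor\lambda\rfloor)$ (the right-continuous extension of the derivative of $\epsilon$); and $\epsilon_s(\lambda)=\int_{\mathbb{S}\times\mathbb{X}^{\lfloor\lambda\rfloor}}\Big(\frac{\beta(\lambda)w(z_1)}{\sum_{i=1}^{\lfloor\lambda\rfloor}w(z_i)}+\frac{(1-\beta(\lambda))w(z_1)}{\sum_{j=1}^{\lfloor\lambda\rfloor+1}w(z_j)}\Big)^2\prod_{n=2}^{\lfloor\lambda\rfloor+1}q(dz_n)\,\pi(dz_1)$. *)

theory Defs
  imports "HOL-Probability.Probability"
begin

definition wgt :: "('a \<Rightarrow> real) \<Rightarrow> ('a \<Rightarrow> real) \<Rightarrow> 'a \<Rightarrow> real" where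
  "wgt p q x = (if p x > 0 then p x / q x else 0)"

definition supp :: "'a measure \<Rightarrow> ('a \<Rightarrow> real) \<Rightarrow> 'a set" where
  "supp M p = {x \<in> space M. p x > 0}"

definition eps_z :: "'a measure \<Rightarrow> ('a \<Rightarrow> real) \<Rightarrow> ('a \<Rightarrow> real) \<Rightarrow> nat \<Rightarrow> 'a \<Rightarrow> real" where
  "eps_z M p q N z1 =
     integral\<^sup>L (PiM {2..N} (\<lambda>_. density M (\<lambda>x. ennreal (q x))))
       (\<lambda>z. wgt p q z1 / (wgt p q z1 + (\<Sum>i\<in>{2..N}. wgt p q (z i))))"

definition eps_N :: "'a measure \<Rightarrow> ('a \<Rightarrow> real) \<Rightarrow> ('a \<Rightarrow> real) \<Rightarrow> nat \<Rightarrow> real" where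
  "eps_N M p q N = (LINT z:supp M p|density M (\<lambda>x. ennreal (p x)). eps_z M p q N z)"

definition beta :: "real \<Rightarrow> real" where
  "beta l = real_of_int \<lfloor>l\<rfloor> + 1 - l"

definition eps_lam :: "'a measure \<Rightarrow> ('a \<Rightarrow> real) \<Rightarrow> ('a \<Rightarrow> real) \<Rightarrow> real \<Rightarrow> real" where
  "eps_lam M p q l = beta l * eps_N M p q (nat \<lfloor>l\<rfloor>) + (1 - beta l) * eps_N M p q (nat \<lfloor>l\<rfloor> + 1)"

text \<open>right-continuous extension of the derivative of epsilon(lambda)\<close>
definition eps_deriv :: "'a measure \<Rightarrow> ('a \<Rightarrow> real) \<Rightarrow> ('a \<Rightarrow> real) \<Rightarrow> real \<Rightarrow> real" where
  "eps_deriv M p q l = eps_N M p q (nat \<lfloor>l\<rfloor> + 1) - eps_N M p q (nat \<lfloor>l\<rfloor>)"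

definition eps_s :: "'a measure \<Rightarrow> ('a \<Rightarrow> real) \<Rightarrow> ('a \<Rightarrow> real) \<Rightarrow> real \<Rightarrow> real" where
  "eps_s M p q l =
     integral\<^sup>L (PiM {1..nat \<lfloor>l\<rfloor> + 1}
        (\<lambda>i. if i = 1 then density M (\<lambda>x. ennreal (p x)) else density M (\<lambda>x. ennreal (q x))))
       (\<lambda>z. indicator (supp M p) (z 1) *
          (beta l * wgt p q (z 1) / (\<Sum>i\<in>{1..nat \<lfloor>l\<rfloor>}. wgt p q (z i))
           + (1 - beta l) * wgt p q (z 1) / (\<Sum>j\<in>{1..nat \<lfloor>l\<rfloor> + 1}. wgt p q (z j)))\<^sup>2)"

end

theory Submission
  imports Defs "HOL-Real_Asymp.Real_Asymp"
begin

lemma ptw: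
  fixes a R t b n W :: real
  assumes a: "0 < a" "a \<le> W" and R: "0 \<le> R" and t: "0 \<le> t" "t \<le> W" and b: "0 \<le> b" "b \<le> 1" and n: "0 < n"
  shows "a/(a+R) - a/(a+R+t) \<le> (if R \<le> n/2 then 1 else 0) + 4*W^2/n^2"
    and "(b*a/(a+R) + (1-b)*a/(a+R+t))^2 \<le> (if R \<le> n/2 then 1 else 0) + 4*W^2/n^2"
proof -
  define uu where "uu = a/(a+R)"
  define vv where "vv = a/(a+R+t)"
  have u01: "0 \<le> uu" "uu \<le> 1" using a R by (auto simp: uu_def divide_le_eq_1)
  have v0: "0 \<le> vv" using a R t by (simp add: vv_def)
  have vu: "vv \<le> uu" unfolding uu_def vv_def using a R t by (intro divide_left_mono) auto
  have c0: "0 \<le> 4*W^2/n^2" by simp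
  have big: "uu \<le> 2*W/n" if Rn: "\<not> R \<le> n/2"
  proof -
    have "uu \<le> W / R" unfolding uu_def using a R Rn n by (intro frac_le) auto
    also have "\<dots> \<le> W / (n/2)" using Rn n a by (intro divide_left_mono) auto
    finally show ?thesis by (simp add: mult.commute)
  qed
  have usq: "uu^2 \<le> 4*W^2/n^2" if Rn: "\<not> R \<le> n/2"
  proof -
    have "uu^2 \<le> (2*W/n)^2" using big[OF Rn] u01 by (intro power_mono) auto
    then show ?thesis by (simp add: power_divide power_mult_distrib)
  qed
  show "a/(a+R) - a/(a+R+t) \<le> (if R \<le> n/2 then 1 else 0) + 4*W^2/n^2"
  proof (cases "R \<le> n/2")
    case True
    have "uu - vv \<le> 1 + 4*W^2/n^2" using u01 v0 c0 by linarith
    then show ?thesis using True unfolding uu_def vv_def by simp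
  next
    case False
    have "a/(a+R) - a/(a+R+t) = a*t/((a+R)*(a+R+t))"
      using a R t by (simp add: field_simps)
    also have "\<dots> \<le> (W*W)/(R*R)"
    proof (rule frac_le)
      show "0 \<le> W*W" by simp
      show "a*t \<le> W*W" using a t by (intro mult_mono) auto
      show "0 < R*R" using False n by simp
      show "R*R \<le> (a+R)*(a+R+t)" using a R t False by (intro mult_mono) auto
    qed
    also have "\<dots> \<le> (W*W)/((n/2)*(n/2))"
      using False n by (intro divide_left_mono mult_mono) auto
    also have "\<dots> = 4*W^2/n^2" by (simp add: power2_eq_square field_simps)
    finally show ?thesis using False by simp
  qed
  have X: "0 \<le> b*uu + (1-b) * vv" "b*uu + (1-b) * vv \<le> uu"
  proof -
    have "(1-b) * vv \<le> (1-b)*uu" using b vu by (intro mult_left_mono) auto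
    moreover have "0 \<le> (1-b) * vv" "0 \<le> b*uu" using b v0 u01 by auto
    ultimately show "0 \<le> b*uu + (1-b) * vv" "b*uu + (1-b) * vv \<le> uu" by (auto simp: algebra_simps)
  qed
  have "(b*a/(a+R) + (1-b)*a/(a+R+t)) = b*uu + (1-b) * vv" by (simp add: uu_def vv_def)
  moreover have "(b*uu + (1-b) * vv)^2 \<le> uu^2" using X by (intro power_mono) auto
  moreover have "uu^2 \<le> 1" using u01 by (simp add: power_le_one)
  ultimately show "(b*a/(a+R) + (1-b)*a/(a+R+t))^2 \<le> (if R \<le> n/2 then 1 else 0) + 4*W^2/n^2"
  proof (cases "R \<le> n/2")
    case True
    assume e: "(b*a/(a+R) + (1-b)*a/(a+R+t)) = b*uu + (1-b) * vv" "(b*uu + (1-b) * vv)^2 \<le> uu^2" "uu^2 \<le> 1"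
    have "(b*uu + (1-b) * vv)^2 \<le> 1 + 4*W^2/n^2" using e c0 by linarith
    then show ?thesis using True e(1) by simp
  next
    case False
    assume e: "(b*a/(a+R) + (1-b)*a/(a+R+t)) = b*uu + (1-b) * vv" "(b*uu + (1-b) * vv)^2 \<le> uu^2" "uu^2 \<le> 1"
    have "(b*uu + (1-b) * vv)^2 \<le> 4*W^2/n^2" using e usq[OF False] by linarith
    then show ?thesis using False e(1) by simp
  qed
qed

lemma sq_int_le:
  fixes X :: "_ \<Rightarrow> real"
  assumes "prob_space Mu" "integrable Mu X" "integrable Mu (\<lambda>x. (X x)^2)"
  shows "(integral\<^sup>L Mu X)^2 \<le> (\<integral>x. (X x)^2 \<partial>Mu)"
proof -
  interpret prob_space Mu by fact
  define c where "c = integral\<^sup>L Mu X"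
  have "0 \<le> (\<integral>x. (X x - c)^2 \<partial>Mu)" by (rule integral_nonneg_AE) auto
  also have "(\<integral>x. (X x - c)^2 \<partial>Mu) = (\<integral>x. (X x)^2 + c^2 - 2*X x*c \<partial>Mu)"
    by (simp add: power2_diff)
  also have "\<dots> = (\<integral>x. (X x)^2 \<partial>Mu) + c^2 - 2*c*c"
    using assms(2,3) by (simp add: Bochner_Integration.integral_diff Bochner_Integration.integral_add Bochner_Integration.integrable_diff Bochner_Integration.integrable_add prob_space c_def)
  finally show ?thesis unfolding c_def[symmetric] by (simp add: power2_eq_square)
qed

lemma big_lim: "(W::real) > 0 \<Longrightarrow> ((\<lambda>x::real. (b + 2*a + 2*b*(x+1)) * (exp (- (x - 1) / (2 * W^2)) + 4*W^2/(x-1)^2)) \<longlongrightarrow> 0) at_top"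
  by real_asymp

locale wset =
  fixes M :: "'a measure" and p q :: "'a \<Rightarrow> real"
  assumes pm[measurable]: "p \<in> borel_measurable M" and qm[measurable]: "q \<in> borel_measurable M"
    and p_nn: "\<And>x. x \<in> space M \<Longrightarrow> p x \<ge> 0" and q_nn: "\<And>x. x \<in> space M \<Longrightarrow> q x \<ge> 0"
    and p1: "(\<integral>\<^sup>+ x. ennreal (p x) \<partial>M) = 1" and q1: "(\<integral>\<^sup>+ x. ennreal (q x) \<partial>M) = 1"
    and pq: "\<And>x. x \<in> space M \<Longrightarrow> p x > 0 \<Longrightarrow> q x > 0"
    and bdd: "bdd_above (wgt p q ` space M)"
begin

abbreviation "P \<equiv> density M (\<lambda>x. ennreal (p x))"
abbreviation "Q \<equiv> density M (\<lambda>x. ennreal (q x))"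
abbreviation "w \<equiv> wgt p q"
abbreviation "S \<equiv> supp M p"
definition "W = max 1 (Sup (w ` space M))"

lemma w_meas[measurable]: "w \<in> borel_measurable M"
  unfolding wgt_def[abs_def] by measurable

lemma sets_P[measurable_cong]: "sets P = sets M" and sets_Q[measurable_cong]: "sets Q = sets M"
  by auto

lemma space_P[simp]: "space P = space M" and space_Q[simp]: "space Q = space M"
  by auto

lemma w_nn: "x \<in> space M \<Longrightarrow> 0 \<le> w x"
  using p_nn q_nn by (auto simp: wgt_def)

lemma w_le: "x \<in> space M \<Longrightarrow> w x \<le> W"
  unfolding W_def using bdd by (auto intro: cSUP_upper2 max.coboundedI2)

lemma W_ge1: "1 \<le> W" by (simp add: W_def)

lemma w_pos: "x \<in> space M \<Longrightarrow> 0 < w x \<longleftrightarrow> 0 < p x"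
  using pq[of x] q_nn[of x] by (auto simp: wgt_def)

lemma P_prob: "prob_space P"
  by (rule prob_spaceI) (simp add: emeasure_density p1)
lemma Q_prob: "prob_space Q"
  by (rule prob_spaceI) (simp add: emeasure_density q1)

lemma P_eq: "P = density Q (\<lambda>x. ennreal (w x))"
proof -
  have "density Q (\<lambda>x. ennreal (w x)) = density M (\<lambda>x. ennreal (q x) * ennreal (w x))"
    by (rule density_density_eq) auto
  also have "\<dots> = P"
  proof (rule density_cong)
    show "AE x in M. ennreal (q x) * ennreal (w x) = ennreal (p x)"
    proof (rule AE_I2)
      fix x assume x: "x \<in> space M"
      show "ennreal (q x) * ennreal (w x) = ennreal (p x)"
      proof (cases "p x > 0")
        case True with pq[OF x] show ?thesis
          by (simp add: wgt_def ennreal_mult'[symmetric] q_nn x)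
      next
        case False with p_nn[OF x] have "p x = 0" by auto
        then show ?thesis by (simp add: wgt_def)
      qed
    qed
  qed auto
  finally show ?thesis by simp
qed

lemma int_P: "f \<in> borel_measurable M \<Longrightarrow> integral\<^sup>L P f = (\<integral>x. w x * f x \<partial>Q)"
  apply (subst P_eq)
  apply (subst integral_density)
  apply (auto simp: w_nn AE_density)
  done

lemma int_wQ: "(\<integral>x. w x \<partial>Q) = 1"
proof -
  interpret prob_space P by (rule P_prob)
  have "integral\<^sup>L P (\<lambda>_. 1::real) = 1" using prob_space by simp
  then show ?thesis using int_P[of "\<lambda>_. 1"] by simp
qed

lemma AE_S: "AE x in P. x \<in> S"
  by (subst AE_density) (auto simp: supp_def)

lemma int_bdd: "prob_space N \<Longrightarrow> f \<in> borel_measurable N \<Longrightarrow> (\<And>x. x\<in>space N \<Longrightarrow> \<bar>f x\<bar> \<le> B) \<Longrightarrow> integrable N (f::_\<Rightarrow>real)"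
proof -
  assume a: "prob_space N" "f \<in> borel_measurable N" "\<And>x. x\<in>space N \<Longrightarrow> \<bar>f x\<bar> \<le> B"
  interpret prob_space N by (rule a)
  show ?thesis by (rule integrable_const_bound[where B=B]) (use a in auto)
qed

lemma prodQ: "product_prob_space (\<lambda>_::nat. Q)"
  unfolding product_prob_space_def product_sigma_finite_def product_prob_space_axioms_def
  using Q_prob by (auto simp: prob_space_imp_sigma_finite)

lemma QQ_prob: "prob_space (PiM J (\<lambda>_::nat. Q))"
  by (rule prob_space_PiM) (rule Q_prob)

lemma comp_int:
  fixes f :: "'a \<Rightarrow> real"
  assumes "i \<in> J" "f \<in> borel_measurable M"
  shows "(\<integral>z. f (z i) \<partial>PiM J (\<lambda>_::nat. Q)) = (\<integral>x. f x \<partial>Q)"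
proof -
  have "(\<integral>x. f x \<partial>Q) = (\<integral>x. f x \<partial>distr (PiM J (\<lambda>_::nat. Q)) Q (\<lambda>z. z i))"
    by (subst distr_PiM_component) (auto simp: Q_prob assms)
  also have "\<dots> = (\<integral>z. f (z i) \<partial>PiM J (\<lambda>_::nat. Q))"
    using integral_distr[of "\<lambda>z. z i" "PiM J (\<lambda>_::nat. Q)" Q f] assms measurable_component_singleton[of i J "\<lambda>_::nat. Q"]
    by auto
  finally show ?thesis by simp
qed

lemma space_QQ: "z \<in> space (PiM J (\<lambda>_::nat. Q)) \<Longrightarrow> i \<in> J \<Longrightarrow> z i \<in> space M"
  by (auto simp: space_PiM)

lemma int_sumw:
  assumes "finite J"
  shows "(\<integral>z. (\<Sum>i\<in>J. w (z i)) \<partial>PiM J (\<lambda>_::nat. Q)) = real (card J)"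
proof -
  have "(\<integral>z. (\<Sum>i\<in>J. w (z i)) \<partial>PiM J (\<lambda>_::nat. Q)) = (\<Sum>i\<in>J. (\<integral>z. w (z i) \<partial>PiM J (\<lambda>_::nat. Q)))"
  proof (rule Bochner_Integration.integral_sum)
    fix i assume i: "i \<in> J"
    show "integrable (PiM J (\<lambda>_::nat. Q)) (\<lambda>z. w (z i))"
      by (rule int_bdd[where B=W, OF QQ_prob]) (use i in \<open>auto simp: w_nn w_le space_QQ\<close>)
  qed
  also have "\<dots> = (\<Sum>i\<in>J. 1)"
    by (intro sum.cong refl) (simp add: comp_int int_wQ)
  finally show ?thesis by simp
qed

lemma tangent_id: "(A::real) \<noteq> 0 \<Longrightarrow> B \<noteq> 0 \<Longrightarrow> c/B - (c/A - c/A^2*(B - A)) = c*(A-B)^2/(B*A^2)"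
  by (simp add: divide_simps power2_eq_square) algebra

lemma abs_affine_bnd: "0 \<le> (k::real) \<Longrightarrow> 0 \<le> c \<Longrightarrow> \<bar>y\<bar> \<le> B \<Longrightarrow> \<bar>c + k*y\<bar> \<le> c + k*B"
proof -
  assume a: "0 \<le> k" "0 \<le> c" "\<bar>y\<bar> \<le> B"
  have "\<bar>k*y\<bar> \<le> k*B" using a by (simp add: abs_mult mult_left_mono)
  then show ?thesis using a(2) by (auto simp: abs_le_iff)
qed

lemma ez_lower:
  assumes z1: "z1 \<in> space M" "0 < w z1" and N: "N \<ge> 1"
  shows "w z1 / (w z1 + real (N - 1)) \<le> eps_z M p q N z1"
proof -
  define c where "c = w z1"
  define m where "m = real (N - 1)"
  let ?Q = "PiM {2..N} (\<lambda>_::nat. Q)"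
  define R where "R = (\<lambda>z. \<Sum>i\<in>{2..N}. w (z i))"
  have c: "c > 0" using z1 by (simp add: c_def)
  have m: "m \<ge> 0" by (simp add: m_def)
  have Rnn: "z \<in> space ?Q \<Longrightarrow> 0 \<le> R z" for z
    unfolding R_def by (intro sum_nonneg) (auto simp: w_nn space_QQ)
  have Rle: "z \<in> space ?Q \<Longrightarrow> R z \<le> real N * W" for z
  proof -
    assume z: "z \<in> space ?Q"
    have "R z \<le> (\<Sum>i\<in>{2..N}. W)" unfolding R_def by (intro sum_mono w_le space_QQ[OF z]) auto
    also have "\<dots> \<le> real N * W" using W_ge1 by (simp add: mult_right_mono)
    finally show ?thesis .
  qed
  have Rm[measurable]: "R \<in> borel_measurable ?Q" unfolding R_def by measurable
  have intR: "(\<integral>z. R z \<partial>?Q) = m" unfolding R_def m_def by (simp add: int_sumw)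
  have iR: "integrable ?Q R"
    by (rule int_bdd[where B="real N * W", OF QQ_prob]) (auto simp: Rnn Rle abs_le_iff intro: order_trans[OF _ Rnn])
  have key: "c / (c + m) - c / (c + m)^2 * (R z - m) \<le> c / (c + R z)" if z: "z \<in> space ?Q" for z
  proof -
    have r: "0 \<le> R z" using Rnn[OF z] .
    have "c / (c + R z) - (c / (c + m) - c / (c + m)^2 * (R z - m)) = c * (m - R z)^2 / ((c + R z) * (c + m)^2)"
    proof -
      have "c + m \<noteq> 0" "c + R z \<noteq> 0" using c m r by auto
      from tangent_id[OF this, of c] show ?thesis by (simp add: algebra_simps)
    qed
    also have "\<dots> \<ge> 0" using c m r by (intro divide_nonneg_pos mult_nonneg_nonneg) auto
    finally show ?thesis by simp
  qed
  have "c / (c + m) = (\<integral>z. (c / (c + m) - c / (c + m)^2 * (R z - m)) \<partial>?Q)"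
  proof -
    interpret prob_space ?Q by (rule QQ_prob)
    have "(\<integral>z. (c / (c + m) - c / (c + m)^2 * (R z - m)) \<partial>?Q) = c / (c + m) - c / (c + m)^2 * ((\<integral>z. R z \<partial>?Q) - m)"
      using iR by (simp add: integral_diff integrable_diff prob_space)
    then show ?thesis using intR by simp
  qed
  also have "\<dots> \<le> (\<integral>z. c / (c + R z) \<partial>?Q)"
  proof (rule integral_mono)
    show "integrable ?Q (\<lambda>z. c / (c + m) - c / (c + m)^2 * (R z - m))"
    proof -
      interpret prob_space ?Q by (rule QQ_prob)
      show ?thesis by (intro Bochner_Integration.integrable_diff integrable_mult_right iR) auto
    qed
    show "integrable ?Q (\<lambda>z. c / (c + R z))"
    proof (rule int_bdd[where B=1, OF QQ_prob])
      fix z assume z: "z \<in> space ?Q"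
      show "\<bar>c / (c + R z)\<bar> \<le> 1" using c Rnn[OF z] by (simp add: abs_le_iff)
    qed auto
  qed (rule key)
  also have "(\<integral>z. c / (c + R z) \<partial>?Q) = eps_z M p q N z1"
    unfolding eps_z_def R_def c_def ..
  finally show ?thesis unfolding c_def m_def .
qed

lemma ez_meas[measurable]: "(\<lambda>z1. eps_z M p q N z1) \<in> borel_measurable M"
  unfolding eps_z_def
proof (rule sigma_finite_measure.borel_measurable_lebesgue_integral)
  show "sigma_finite_measure (PiM {2..N} (\<lambda>_::nat. Q))"
    using QQ_prob by (rule prob_space_imp_sigma_finite)
qed measurable

lemma ez_bnd: assumes "z1 \<in> space M" shows "0 \<le> eps_z M p q N z1 \<and> eps_z M p q N z1 \<le> 1"
proof -
  let ?Q = "PiM {2..N} (\<lambda>_::nat. Q)"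
  interpret prob_space ?Q by (rule QQ_prob)
  have b: "0 \<le> w z1 / (w z1 + (\<Sum>i\<in>{2..N}. w (z i))) \<and> w z1 / (w z1 + (\<Sum>i\<in>{2..N}. w (z i))) \<le> 1"
    if z: "z \<in> space ?Q" for z
  proof -
    have "0 \<le> (\<Sum>i\<in>{2..N}. w (z i))" by (intro sum_nonneg w_nn space_QQ[OF z]) auto
    moreover have "0 \<le> w z1" using assms by (rule w_nn)
    ultimately show ?thesis by (auto simp: divide_le_eq_1)
  qed
  have i: "integrable ?Q (\<lambda>z. w z1 / (w z1 + (\<Sum>i\<in>{2..N}. w (z i))))"
    by (rule int_bdd[where B=1, OF QQ_prob]) (use b in \<open>auto simp del: abs_divide\<close>)
  have "0 \<le> eps_z M p q N z1" unfolding eps_z_def by (intro integral_nonneg_AE AE_I2) (use b in auto)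
  moreover have "eps_z M p q N z1 \<le> (\<integral>z. 1 \<partial>?Q)" unfolding eps_z_def
    by (intro integral_mono i) (use b in auto)
  ultimately show ?thesis by (simp add: prob_space)
qed

lemma S_sets[measurable]: "S \<in> sets M"
  unfolding supp_def by measurable

lemma set_int_S: assumes "f \<in> borel_measurable M" shows "(LINT z:S|P. f z) = integral\<^sup>L P f"
  unfolding set_lebesgue_integral_def
  by (rule integral_cong_AE) (use assms AE_S in \<open>auto elim!: eventually_mono\<close>)

lemma eN_alt: "eps_N M p q N = (\<integral>z. eps_z M p q N z \<partial>P)"
  unfolding eps_N_def by (rule set_int_S) measurable

lemma tangent2: assumes "(m::real) \<ge> 0" "x \<ge> 0"
  shows "1/(1+m) + (1+2*m)/(1+m)^2*(x-1) \<le> x * (x / (x + m))"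
proof (cases "x + m = 0")
  case True then have "x = 0" "m = 0" using assms by auto
  then show ?thesis by simp
next
  case False
  then have B: "x + m > 0" using assms by auto
  have A: "1 + m > 0" using assms by auto
  have "x * (x / (x + m)) - (1/(1+m) + (1+2*m)/(1+m)^2*(x-1)) = m^2 * (1 - x)^2 / ((1+m)^2 * (x+m))"
    using A B by (simp add: divide_simps power2_eq_square) (simp add: algebra_simps)
  also have "\<dots> \<ge> 0" using A B by simp
  finally show ?thesis by simp
qed

lemma eN_lower: assumes N: "N \<ge> 1" shows "1 / real N \<le> eps_N M p q N"
proof -
  interpret PP: prob_space P by (rule P_prob)
  interpret QP: prob_space Q by (rule Q_prob)
  define m where "m = real (N - 1)"
  have Q1: "measure Q (space M) = 1" using QP.prob_space by simp
  have m: "m \<ge> 0" by (simp add: m_def)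
  have "1 / real N = 1 / (1 + m)" using N by (simp add: m_def)
  also have "\<dots> = (\<integral>x. 1/(1+m) + (1+2*m)/(1+m)^2*(w x - 1) \<partial>Q)"
  proof -
    have iw: "integrable Q w" by (rule int_bdd[where B=W, OF Q_prob]) (auto simp: w_nn w_le abs_le_iff intro: order_trans[OF _ w_nn])
    have "(\<integral>x. 1/(1+m) + (1+2*m)/(1+m)^2*(w x - 1) \<partial>Q) = 1/(1+m) + (1+2*m)/(1+m)^2*((\<integral>x. w x \<partial>Q) - 1)"
      using iw by (simp add: Bochner_Integration.integral_add Bochner_Integration.integral_diff Bochner_Integration.integrable_diff Q1)
    then show ?thesis using int_wQ by simp
  qed
  also have "\<dots> \<le> (\<integral>x. w x * (w x / (w x + m)) \<partial>Q)"
  proof (rule integral_mono)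
    show "integrable Q (\<lambda>x. 1/(1+m) + (1+2*m)/(1+m)^2*(w x - 1))"
    proof (rule int_bdd[where B="1/(1+m) + (1+2*m)/(1+m)^2*(W + 1)", OF Q_prob])
      fix x assume x: "x \<in> space Q"
      have k: "0 \<le> (1+2*m)/(1+m)^2" using m by simp
      have "\<bar>w x - 1\<bar> \<le> W + 1" using w_nn[of x] w_le[of x] x W_ge1 by (auto simp: abs_le_iff)
      from abs_affine_bnd[OF k _ this, of "1/(1+m)"] m
      show "\<bar>1/(1+m) + (1+2*m)/(1+m)^2*(w x - 1)\<bar> \<le> 1/(1+m) + (1+2*m)/(1+m)^2*(W + 1)"
        by simp
    qed measurable
    show "integrable Q (\<lambda>x. w x * (w x / (w x + m)))"
    proof (rule int_bdd[where B=W, OF Q_prob])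
      fix x assume x: "x \<in> space Q"
      have "0 \<le> w x / (w x + m)" "w x / (w x + m) \<le> 1" using w_nn[of x] x m by (auto simp: divide_le_eq_1)
      moreover have "0 \<le> w x" "w x \<le> W" using w_nn[of x] w_le[of x] x by auto
      ultimately have "w x * (w x / (w x + m)) \<le> w x" "0 \<le> w x * (w x / (w x + m))"
        using mult_right_le_one_le[of "w x" "w x / (w x + m)"] mult_nonneg_nonneg[of "w x" "w x / (w x + m)"]
        by (simp_all only:)
      then show "\<bar>w x * (w x / (w x + m))\<bar> \<le> W" using \<open>w x \<le> W\<close> by linarith
    qed measurable
  next
    fix x assume "x \<in> space Q"
    then show "1/(1+m) + (1+2*m)/(1+m)^2*(w x - 1) \<le> w x * (w x / (w x + m))"
      using tangent2[OF m w_nn[of x]] by simp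
  qed
  also have "\<dots> = (\<integral>x. w x / (w x + m) \<partial>P)"
    by (subst int_P) auto
  also have "\<dots> \<le> (\<integral>z. eps_z M p q N z \<partial>P)"
  proof (rule integral_mono_AE)
    show "integrable P (\<lambda>x. w x / (w x + m))"
    proof (rule int_bdd[where B=1, OF P_prob])
      fix x assume x: "x \<in> space P"
      have "0 \<le> w x / (w x + m)" "w x / (w x + m) \<le> 1" using w_nn[of x] x m by (auto simp: divide_le_eq_1)
      then show "\<bar>w x / (w x + m)\<bar> \<le> 1" by linarith
    qed measurable
    show "integrable P (eps_z M p q N)"
      by (rule int_bdd[where B=1, OF P_prob]) (use ez_bnd in \<open>auto simp: abs_le_iff\<close>)
    show "AE x in P. w x / (w x + m) \<le> eps_z M p q N x"
      using AE_S by eventually_elim (use ez_lower N in \<open>auto simp: supp_def w_pos m_def\<close>)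
  qed
  finally show ?thesis by (simp add: eN_alt)
qed

abbreviation "PF \<equiv> (\<lambda>i::nat. if i = 1 then P else Q)"

lemma PF_prob: "prob_space (PF i)" using P_prob Q_prob by auto

lemma prodPF: "product_prob_space PF"
  unfolding product_prob_space_def product_sigma_finite_def product_prob_space_axioms_def
  using PF_prob by (auto simp: prob_space_imp_sigma_finite)

lemma PP_prob: "prob_space (PiM J PF)"
  by (rule prob_space_PiM) (rule PF_prob)

lemma sets_PF: "sets (PF i) = sets M" by auto

lemma PF_comp_meas[measurable]: "i \<in> I \<Longrightarrow> f \<in> borel_measurable M \<Longrightarrow> (\<lambda>z. (f::_\<Rightarrow>real) (z i)) \<in> borel_measurable (PiM I PF)"
  by (rule measurable_compose[OF measurable_component_singleton]) (auto simp: measurable_cong_sets[OF sets_PF refl])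

lemma space_PP: "z \<in> space (PiM J PF) \<Longrightarrow> i \<in> J \<Longrightarrow> z i \<in> space M"
  by (auto simp: space_PiM split: if_splits)

lemma marg:
  assumes K: "1 \<le> K" "K \<le> L"
  shows "(\<integral>z. indicator S (z 1) * (w (z 1) / (\<Sum>i\<in>{1..K}. w (z i))) \<partial>PiM {1..L} PF) = eps_N M p q K"
proof -
  define G where "G = (\<lambda>z::nat\<Rightarrow>'a. indicator S (z 1) * (w (z 1) / (\<Sum>i\<in>{1..K}. w (z i))))"
  interpret PFP: product_prob_space PF by (rule prodPF)
  have Gm: "G \<in> borel_measurable (PiM {1..K} PF)"
  proof -
    have "(\<lambda>z. indicator S (z 1) :: real) \<in> borel_measurable (PiM {1..K} PF)"
      using K PF_comp_meas[of 1 "{1..K}" "indicator S"] by auto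
    moreover have "(\<lambda>z. w (z 1)) \<in> borel_measurable (PiM {1..K} PF)"
      using K PF_comp_meas[of 1 "{1..K}" w] by auto
    moreover have "(\<lambda>z. (\<Sum>i\<in>{1..K}. w (z i))) \<in> borel_measurable (PiM {1..K} PF)"
      by (intro borel_measurable_sum PF_comp_meas) auto
    ultimately show ?thesis unfolding G_def by measurable
  qed
  have "(\<integral>z. G z \<partial>PiM {1..L} PF) = (\<integral>z. G (restrict z {1..K}) \<partial>PiM {1..L} PF)"
    by (rule Bochner_Integration.integral_cong) (auto simp: G_def)
  also have "\<dots> = (\<integral>z. G z \<partial>PiM {1..K} PF)"
  proof -
    have sub: "{1..K} \<subseteq> {1..L}" using K by auto
    show ?thesis
      by (subst PFP.distr_restrict[OF sub], simp, subst integral_distr[OF measurable_restrict_subset[OF sub] Gm]) simp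
  qed
  also have "\<dots> = (\<integral>z. G z \<partial>PiM (insert 1 {2..K}) PF)"
  proof -
    have "{1..K} = insert 1 {2..K}" using K by auto
    then show ?thesis by simp
  qed
  also have "\<dots> = (\<integral>z. G z \<partial>distr (P \<Otimes>\<^sub>M PiM {2..K} PF) (PiM (insert 1 {2..K}) PF) (\<lambda>(x, X). X(1 := x)))"
    using distr_pair_PiM_eq_PiM[of "{2..K}" PF 1] by (simp add: P_prob Q_prob)
  also have "\<dots> = (\<integral>xX. G ((snd xX)(1 := fst xX)) \<partial>(P \<Otimes>\<^sub>M PiM {2..K} PF))"
  proof (subst integral_distr)
    show "(\<lambda>(x, X). X(1 := x)) \<in> measurable (P \<Otimes>\<^sub>M PiM {2..K} PF) (PiM (insert 1 {2..K}) PF)"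
      using measurable_add_dim[of 1 "{2..K}" PF] by simp
    show "G \<in> borel_measurable (PiM (insert 1 {2..K}) PF)"
    proof -
      have "{1..K} = insert 1 {2..K}" using K by auto
      then show ?thesis using Gm by simp
    qed
  qed (auto simp: case_prod_beta)
  also have "\<dots> = (\<integral>xX. indicator S (fst xX) * (w (fst xX) / (w (fst xX) + (\<Sum>i\<in>{2..K}. w (snd xX i)))) \<partial>(P \<Otimes>\<^sub>M PiM {2..K} PF))"
  proof (rule Bochner_Integration.integral_cong[OF refl])
    fix xX assume "xX \<in> space (P \<Otimes>\<^sub>M PiM {2..K} PF)"
    have "(\<Sum>i\<in>{1..K}. w (((snd xX)(1 := fst xX)) i)) = w (fst xX) + (\<Sum>i\<in>{2..K}. w (((snd xX)(1 := fst xX)) i))"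
      using K by (subst sum.atLeast_Suc_atMost) (auto simp: numeral_2_eq_2)
    also have "(\<Sum>i\<in>{2..K}. w (((snd xX)(1 := fst xX)) i)) = (\<Sum>i\<in>{2..K}. w (snd xX i))"
      by (intro sum.cong) auto
    finally show "G ((snd xX)(1 := fst xX)) = indicator S (fst xX) * (w (fst xX) / (w (fst xX) + (\<Sum>i\<in>{2..K}. w (snd xX i))))"
      unfolding G_def by simp
  qed
  also have "\<dots> = (\<integral>x. (\<integral>X. indicator S x * (w x / (w x + (\<Sum>i\<in>{2..K}. w (X i)))) \<partial>PiM {2..K} PF) \<partial>P)"
  proof -
    interpret PS: pair_sigma_finite P "PiM {2..K} PF"
      unfolding pair_sigma_finite_def using P_prob PP_prob by (auto simp: prob_space_imp_sigma_finite)
    interpret PSP: prob_space "P \<Otimes>\<^sub>M PiM {2..K} PF"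
      by (intro prob_space_pair P_prob PP_prob)
    have "integrable (P \<Otimes>\<^sub>M PiM {2..K} PF) (\<lambda>xX. indicator S (fst xX) * (w (fst xX) / (w (fst xX) + (\<Sum>i\<in>{2..K}. w (snd xX i)))))"
    proof (rule int_bdd[where B=1])
      show "prob_space (P \<Otimes>\<^sub>M PiM {2..K} PF)" by (intro prob_space_pair P_prob PP_prob)
      fix xX assume xX: "xX \<in> space (P \<Otimes>\<^sub>M PiM {2..K} PF)"
      then have x: "fst xX \<in> space M" and X: "snd xX \<in> space (PiM {2..K} PF)" by (auto simp: space_pair_measure)
      have "0 \<le> (\<Sum>i\<in>{2..K}. w (snd xX i))" by (intro sum_nonneg w_nn space_PP[OF X]) auto
      moreover have "0 \<le> w (fst xX)" by (rule w_nn[OF x])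
      ultimately have "0 \<le> w (fst xX) / (w (fst xX) + (\<Sum>i\<in>{2..K}. w (snd xX i)))"
        "w (fst xX) / (w (fst xX) + (\<Sum>i\<in>{2..K}. w (snd xX i))) \<le> 1" by (auto simp: divide_le_eq_1)
      then show "\<bar>indicator S (fst xX) * (w (fst xX) / (w (fst xX) + (\<Sum>i\<in>{2..K}. w (snd xX i))))\<bar> \<le> 1"
        by (auto simp: indicator_def simp del: abs_divide)
    next
      have [measurable]: "(\<lambda>X. (\<Sum>i\<in>{2..K}. w (X i))) \<in> borel_measurable (PiM {2..K} PF)"
        by (intro borel_measurable_sum PF_comp_meas) auto
      show "(\<lambda>xX. indicator S (fst xX) * (w (fst xX) / (w (fst xX) + (\<Sum>i\<in>{2..K}. w (snd xX i))))) \<in> borel_measurable (P \<Otimes>\<^sub>M PiM {2..K} PF)"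
        by measurable
    qed
    from PS.integral_fst'[OF this] show ?thesis by simp
  qed
  also have "\<dots> = (\<integral>x. indicator S x * eps_z M p q K x \<partial>P)"
  proof (rule Bochner_Integration.integral_cong[OF refl])
    fix x assume "x \<in> space P"
    have "PiM {2..K} PF = PiM {2..K} (\<lambda>_. Q)" by (rule PiM_cong) auto
    then show "(\<integral>X. indicator S x * (w x / (w x + (\<Sum>i\<in>{2..K}. w (X i)))) \<partial>PiM {2..K} PF) = indicator S x * eps_z M p q K x"
      unfolding eps_z_def by (simp del: times_divide_eq_right)
  qed
  also have "\<dots> = eps_N M p q K"
    unfolding eps_N_def set_lebesgue_integral_def by simp
  finally show ?thesis unfolding G_def .
qed

lemma indep_proj: assumes "finite J" "J \<noteq> {}"
  shows "prob_space.indep_vars (PiM J (\<lambda>_::nat. Q)) (\<lambda>_. borel) (\<lambda>i z. w (z i)) J"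
proof -
  let ?Q = "PiM J (\<lambda>_::nat. Q)"
  interpret prob_space ?Q by (rule QQ_prob)
  have "indep_vars (\<lambda>_. Q) (\<lambda>i z. z i) J"
  proof (subst indep_vars_iff_distr_eq_PiM')
    show "J \<noteq> {}" by fact
    show "\<And>i. i \<in> J \<Longrightarrow> random_variable Q (\<lambda>z. z i)" by (rule measurable_component_singleton)
    have "distr ?Q ?Q (\<lambda>x. \<lambda>i\<in>J. x i) = distr ?Q ?Q (\<lambda>x. x)"
      by (rule distr_cong) (auto simp: space_PiM)
    also have "\<dots> = ?Q" by (rule distr_id2) simp
    also have "\<dots> = PiM J (\<lambda>i. distr ?Q Q (\<lambda>x. x i))"
      by (rule PiM_cong) (use distr_PiM_component[of J "\<lambda>_. Q"] Q_prob in auto)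
    finally show "distr ?Q ?Q (\<lambda>x. \<lambda>i\<in>J. x i) = PiM J (\<lambda>i. distr ?Q Q (\<lambda>x. x i))" .
  qed
  then show ?thesis
    by (rule indep_vars_compose2) auto
qed

lemma hoeff:
  assumes J: "finite J" "card J = n" "n > 0"
  shows "measure (PiM J (\<lambda>_::nat. Q)) {z \<in> space (PiM J (\<lambda>_::nat. Q)). (\<Sum>i\<in>J. w (z i)) \<le> real n / 2}
     \<le> exp (- real n / (2 * W^2))"
proof -
  let ?Q = "PiM J (\<lambda>_::nat. Q)"
  have Jne: "J \<noteq> {}" using J by auto
  interpret prob_space ?Q by (rule QQ_prob)
  interpret H: Hoeffding_ineq ?Q J "\<lambda>i z. w (z i)" "\<lambda>_. 0" "\<lambda>_. W" "real n"
  proof unfold_locales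
    show "finite J" by fact
    show "indep_vars (\<lambda>_. borel) (\<lambda>i z. w (z i)) J" by (rule indep_proj[OF J(1) Jne])
    show "\<And>i. i \<in> J \<Longrightarrow> AE x in ?Q. w (x i) \<in> {0..W}"
      by (intro AE_I2) (auto simp: w_nn w_le space_QQ)
    show "real n \<equiv> \<Sum>i\<in>J. expectation (\<lambda>z. w (z i))"
      using J by (simp add: comp_int int_wQ)
  qed
  have pos: "(\<Sum>i\<in>J. (W - 0)\<^sup>2) > 0" using J W_ge1 by simp
  have "prob {x \<in> space ?Q. (\<Sum>i\<in>J. w (x i)) \<le> real n - real n / 2} \<le> exp (-2 * (real n / 2)\<^sup>2 / (\<Sum>i\<in>J. (W - 0)\<^sup>2))"
    by (rule H.Hoeffding_ineq_le[OF _ pos]) simp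
  moreover have "-2 * (real n / 2)\<^sup>2 / (\<Sum>i\<in>J. (W - 0)\<^sup>2) = - real n / (2 * W^2)"
    using J W_ge1 by (simp add: power2_eq_square field_simps)
  moreover have "real n - real n / 2 = real n / 2" by simp
  ultimately show ?thesis by simp
qed

lemma measure_bad:
  assumes N: "N \<ge> 2" "N \<le> L"
  shows "measure (PiM {1..L} PF) {z \<in> space (PiM {1..L} PF). (\<Sum>i\<in>{2..N}. w (z i)) \<le> real (N - 1) / 2}
     \<le> exp (- real (N - 1) / (2 * W^2))"
proof -
  interpret PFP: product_prob_space PF by (rule prodPF)
  have sub: "{2..N} \<subseteq> {1..L}" using N by auto
  define E' where "E' = {z \<in> space (PiM {2..N} PF). (\<Sum>i\<in>{2..N}. w (z i)) \<le> real (N - 1) / 2}"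
  have E'm: "E' \<in> sets (PiM {2..N} PF)"
  proof -
    have [measurable]: "(\<lambda>z. (\<Sum>i\<in>{2..N}. w (z i))) \<in> borel_measurable (PiM {2..N} PF)"
      by (intro borel_measurable_sum PF_comp_meas) auto
    show ?thesis unfolding E'_def by measurable
  qed
  have "measure (PiM {2..N} PF) E' = measure (PiM {1..L} PF) ((\<lambda>z. restrict z {2..N}) -` E' \<inter> space (PiM {1..L} PF))"
    by (subst PFP.distr_restrict[OF sub], simp, rule measure_distr[OF measurable_restrict_subset[OF sub] E'm])
  also have "(\<lambda>z. restrict z {2..N}) -` E' \<inter> space (PiM {1..L} PF) = {z \<in> space (PiM {1..L} PF). (\<Sum>i\<in>{2..N}. w (z i)) \<le> real (N - 1) / 2}"
    using sub unfolding E'_def by (auto simp: space_PiM)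
  finally have eq: "measure (PiM {1..L} PF) {z \<in> space (PiM {1..L} PF). (\<Sum>i\<in>{2..N}. w (z i)) \<le> real (N - 1) / 2} = measure (PiM {2..N} PF) E'" ..
  have "PiM {2..N} PF = PiM {2..N} (\<lambda>_. Q)" by (rule PiM_cong) auto
  with eq have "measure (PiM {1..L} PF) {z \<in> space (PiM {1..L} PF). (\<Sum>i\<in>{2..N}. w (z i)) \<le> real (N - 1) / 2}
     = measure (PiM {2..N} (\<lambda>_. Q)) {z \<in> space (PiM {2..N} (\<lambda>_. Q)). (\<Sum>i\<in>{2..N}. w (z i)) \<le> real (N - 1) / 2}"
    unfolding E'_def by simp
  also have "\<dots> \<le> exp (- real (N - 1) / (2 * W^2))"
    by (rule hoeff) (use N in auto)
  finally show ?thesis .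
qed

lemma sum_split1: "(N::nat) \<ge> 1 \<Longrightarrow> (\<Sum>i\<in>{1..N}. f i) = f 1 + (\<Sum>i\<in>{2..N}. (f i::real))"
  by (subst sum.atLeast_Suc_atMost) (auto simp: numeral_2_eq_2)

lemma sum_split2: "(N::nat) \<ge> 1 \<Longrightarrow> (\<Sum>i\<in>{1..N+1}. f i) = f 1 + (\<Sum>i\<in>{2..N}. f i) + (f (N+1)::real)"
proof -
  assume N: "N \<ge> 1"
  have "{1..N+1} = insert (N+1) {1..N}" by auto
  then have "(\<Sum>i\<in>{1..N+1}. f i) = f (N+1) + (\<Sum>i\<in>{1..N}. f i)" by simp
  then show ?thesis using sum_split1[OF N, of f] by simp
qed

lemma ptw_space:
  assumes N: "N \<ge> 2" and z: "z \<in> space (PiM {1..N+1} PF)" and b: "0 \<le> b" "b \<le> 1"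
  defines "E \<equiv> {z \<in> space (PiM {1..N+1} PF). (\<Sum>i\<in>{2..N}. w (z i)) \<le> real (N - 1) / 2}"
  shows "indicator S (z 1) * (w (z 1) / (\<Sum>i\<in>{1..N}. w (z i))) - indicator S (z 1) * (w (z 1) / (\<Sum>i\<in>{1..N+1}. w (z i)))
           \<le> indicator E z + 4*W^2/(real (N - 1))^2"
    and "indicator S (z 1) * (b * w (z 1) / (\<Sum>i\<in>{1..N}. w (z i)) + (1 - b) * w (z 1) / (\<Sum>i\<in>{1..N+1}. w (z i)))^2
           \<le> indicator E z + 4*W^2/(real (N - 1))^2"
proof -
  have c0: "0 \<le> 4*W^2/(real (N - 1))^2" by simp
  have i0: "0 \<le> (indicator E z :: real)" by simp
  have zs: "i \<in> {1..N+1} \<Longrightarrow> z i \<in> space M" for i using space_PP[OF z] by auto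
  define R where "R = (\<Sum>i\<in>{2..N}. w (z i))"
  have R0: "0 \<le> R" unfolding R_def by (intro sum_nonneg w_nn zs) auto
  have s1: "(\<Sum>i\<in>{1..N}. w (z i)) = w (z 1) + R" unfolding R_def using N by (intro sum_split1) auto
  have s2: "(\<Sum>i\<in>{1..N+1}. w (z i)) = w (z 1) + R + w (z (N+1))" unfolding R_def using N by (intro sum_split2) auto
  have ind: "(if R \<le> real (N - 1) / 2 then 1 else 0) = (indicator E z :: real)"
    unfolding E_def R_def using z by (auto simp: indicator_def)
  have "indicator S (z 1) * (w (z 1) / (\<Sum>i\<in>{1..N}. w (z i))) - indicator S (z 1) * (w (z 1) / (\<Sum>i\<in>{1..N+1}. w (z i)))
           \<le> indicator E z + 4*W^2/(real (N - 1))^2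
      \<and> indicator S (z 1) * (b * w (z 1) / (\<Sum>i\<in>{1..N}. w (z i)) + (1 - b) * w (z 1) / (\<Sum>i\<in>{1..N+1}. w (z i)))^2
           \<le> indicator E z + 4*W^2/(real (N - 1))^2"
  proof (cases "z 1 \<in> S")
    case False then show ?thesis using c0 i0 by simp
  next
    case True
    have a: "0 < w (z 1)" "w (z 1) \<le> W" using True w_le[of "z 1"] by (auto simp: supp_def w_pos)
    have t: "0 \<le> w (z (N+1))" "w (z (N+1)) \<le> W" using zs[of "N+1"] w_nn w_le by auto
    have n: "0 < real (N - 1)" using N by simp
    note P = ptw[OF a R0 t b n]
    show ?thesis using True P unfolding s1 s2 ind by simp
  qed
  then show "indicator S (z 1) * (w (z 1) / (\<Sum>i\<in>{1..N}. w (z i))) - indicator S (z 1) * (w (z 1) / (\<Sum>i\<in>{1..N+1}. w (z i)))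
           \<le> indicator E z + 4*W^2/(real (N - 1))^2"
    and "indicator S (z 1) * (b * w (z 1) / (\<Sum>i\<in>{1..N}. w (z i)) + (1 - b) * w (z 1) / (\<Sum>i\<in>{1..N+1}. w (z i)))^2
           \<le> indicator E z + 4*W^2/(real (N - 1))^2" by auto
qed

lemma sumw_PP_meas: "A \<subseteq> I \<Longrightarrow> (\<lambda>z. \<Sum>i\<in>A. w (z i)) \<in> borel_measurable (PiM I PF)"
  by (intro borel_measurable_sum PF_comp_meas) auto

lemma w1_PP_meas: "1 \<in> I \<Longrightarrow> (\<lambda>z. w (z 1)) \<in> borel_measurable (PiM I PF)"
  by (intro PF_comp_meas) auto

lemma ind1_PP_meas: "1 \<in> I \<Longrightarrow> (\<lambda>z. indicator S (z 1) :: real) \<in> borel_measurable (PiM I PF)"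
  by (intro PF_comp_meas) auto

definition "Dn N = exp (- real (N - 1) / (2 * W^2)) + 4*W^2/(real (N - 1))^2"

lemma Bf_int:
  assumes N: "N \<ge> 2"
  defines "E \<equiv> {z \<in> space (PiM {1..N+1} PF). (\<Sum>i\<in>{2..N}. w (z i)) \<le> real (N - 1) / 2}"
  shows "integrable (PiM {1..N+1} PF) (\<lambda>z. indicator E z + 4*W^2/(real (N - 1))^2)"
    and "(\<integral>z. indicator E z + 4*W^2/(real (N - 1))^2 \<partial>PiM {1..N+1} PF) \<le> Dn N"
proof -
  interpret PPP: prob_space "PiM {1..N+1} PF" by (rule PP_prob)
  have [measurable]: "(\<lambda>z. \<Sum>i\<in>{2..N}. w (z i)) \<in> borel_measurable (PiM {1..N+1} PF)"
    by (rule sumw_PP_meas) auto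
  have Em: "E \<in> sets (PiM {1..N+1} PF)" unfolding E_def by measurable
  have fin: "emeasure (PiM {1..N+1} PF) E < \<infinity>" using PPP.emeasure_finite[of E] by (simp add: less_top)
  have i1: "integrable (PiM {1..N+1} PF) (indicator E :: _ \<Rightarrow> real)"
    by (intro integrable_real_indicator Em fin)
  have i2: "integrable (PiM {1..N+1} PF) (\<lambda>z. 4*W^2/(real (N - 1))^2)"
    by (rule PPP.integrable_const)
  show i: "integrable (PiM {1..N+1} PF) (\<lambda>z. indicator E z + 4*W^2/(real (N - 1))^2)"
    by (intro Bochner_Integration.integrable_add i1 i2)
  have "(\<integral>z. indicator E z + 4*W^2/(real (N - 1))^2 \<partial>PiM {1..N+1} PF) = (\<integral>z. indicator E z \<partial>PiM {1..N+1} PF) + (\<integral>z. 4*W^2/(real (N - 1))^2 \<partial>PiM {1..N+1} PF)"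
    by (rule Bochner_Integration.integral_add[OF i1 i2])
  also have "\<dots> = measure (PiM {1..N+1} PF) E + 4*W^2/(real (N - 1))^2"
  proof -
    have "(\<integral>z. indicator E z \<partial>PiM {1..N+1} PF) = measure (PiM {1..N+1} PF) E"
      using Em sets.sets_into_space[OF Em] by (simp add: Int_absorb2)
    moreover have "(\<integral>z. 4*W^2/(real (N - 1))^2 \<partial>PiM {1..N+1} PF) = 4*W^2/(real (N - 1))^2"
      using PPP.prob_space by simp
    ultimately show ?thesis by simp
  qed
  also have "\<dots> \<le> Dn N" unfolding Dn_def E_def using measure_bad[of N "N+1"] N by simp
  finally show "(\<integral>z. indicator E z + 4*W^2/(real (N - 1))^2 \<partial>PiM {1..N+1} PF) \<le> Dn N" .
qed

lemma f_int:
  assumes "K \<ge> 1" "K \<le> L"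
  shows "integrable (PiM {1..L} PF) (\<lambda>z. indicator S (z 1) * (w (z 1) / (\<Sum>i\<in>{1..K}. w (z i))))"
proof (rule int_bdd[where B=1, OF PP_prob])
  have [measurable]: "(\<lambda>z. \<Sum>i\<in>{1..K}. w (z i)) \<in> borel_measurable (PiM {1..L} PF)"
    using assms by (intro sumw_PP_meas) auto
  have [measurable]: "(\<lambda>z. w (z 1)) \<in> borel_measurable (PiM {1..L} PF)"
    using assms by (intro w1_PP_meas) auto
  have [measurable]: "(\<lambda>z. indicator S (z 1) :: real) \<in> borel_measurable (PiM {1..L} PF)"
    using assms by (intro ind1_PP_meas) auto
  show "(\<lambda>z. indicator S (z 1) * (w (z 1) / (\<Sum>i\<in>{1..K}. w (z i)))) \<in> borel_measurable (PiM {1..L} PF)"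
    by measurable
  fix z assume z: "z \<in> space (PiM {1..L} PF)"
  have zs: "i \<in> {1..L} \<Longrightarrow> z i \<in> space M" for i using space_PP[OF z] by auto
  have "w (z 1) \<le> (\<Sum>i\<in>{1..K}. w (z i))"
    using assms by (intro member_le_sum w_nn zs) auto
  moreover have "0 \<le> w (z 1)" using assms by (intro w_nn zs) auto
  ultimately have "0 \<le> w (z 1) / (\<Sum>i\<in>{1..K}. w (z i))" "w (z 1) / (\<Sum>i\<in>{1..K}. w (z i)) \<le> 1"
    by (auto simp: divide_le_eq_1)
  then show "\<bar>indicator S (z 1) * (w (z 1) / (\<Sum>i\<in>{1..K}. w (z i)))\<bar> \<le> 1"
    by (auto simp: indicator_def simp del: abs_divide)
qed

lemma diff_bound:
  assumes N: "N \<ge> 2"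
  shows "eps_N M p q N - eps_N M p q (N+1) \<le> Dn N"
proof -
  define E where "E = {z \<in> space (PiM {1..N+1} PF). (\<Sum>i\<in>{2..N}. w (z i)) \<le> real (N - 1) / 2}"
  have "eps_N M p q N - eps_N M p q (N+1) =
     (\<integral>z. indicator S (z 1) * (w (z 1) / (\<Sum>i\<in>{1..N}. w (z i))) \<partial>PiM {1..N+1} PF)
     - (\<integral>z. indicator S (z 1) * (w (z 1) / (\<Sum>i\<in>{1..N+1}. w (z i))) \<partial>PiM {1..N+1} PF)"
  proof -
    have m1: "(\<integral>z. indicator S (z 1) * (w (z 1) / (\<Sum>i\<in>{1..N}. w (z i))) \<partial>PiM {1..N+1} PF) = eps_N M p q N"
      by (rule marg) (use N in auto)
    have m2: "(\<integral>z. indicator S (z 1) * (w (z 1) / (\<Sum>i\<in>{1..N+1}. w (z i))) \<partial>PiM {1..N+1} PF) = eps_N M p q (N+1)"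
      by (rule marg) (use N in auto)
    show ?thesis by (simp only: m1 m2)
  qed
  also have "\<dots> = (\<integral>z. indicator S (z 1) * (w (z 1) / (\<Sum>i\<in>{1..N}. w (z i))) - indicator S (z 1) * (w (z 1) / (\<Sum>i\<in>{1..N+1}. w (z i))) \<partial>PiM {1..N+1} PF)"
    using N by (intro Bochner_Integration.integral_diff[symmetric] f_int) auto
  also have "\<dots> \<le> (\<integral>z. indicator E z + 4*W^2/(real (N - 1))^2 \<partial>PiM {1..N+1} PF)"
  proof (rule integral_mono)
    show "integrable (PiM {1..N+1} PF) (\<lambda>z. indicator E z + 4*W^2/(real (N - 1))^2)"
      unfolding E_def by (rule Bf_int[OF N])
    show "integrable (PiM {1..N+1} PF) (\<lambda>z. indicator S (z 1) * (w (z 1) / (\<Sum>i\<in>{1..N}. w (z i))) - indicator S (z 1) * (w (z 1) / (\<Sum>i\<in>{1..N+1}. w (z i))))"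
      using N by (intro Bochner_Integration.integrable_diff f_int) auto
    fix z assume "z \<in> space (PiM {1..N+1} PF)"
    from ptw_space(1)[OF N this, of 0] show "indicator S (z 1) * (w (z 1) / (\<Sum>i\<in>{1..N}. w (z i))) - indicator S (z 1) * (w (z 1) / (\<Sum>i\<in>{1..N+1}. w (z i))) \<le> indicator E z + 4*W^2/(real (N - 1))^2"
      unfolding E_def by simp
  qed
  also have "\<dots> \<le> Dn N" unfolding E_def by (rule Bf_int[OF N])
  finally show ?thesis .
qed

lemma es_bound:
  assumes N: "N \<ge> 2" and b: "0 \<le> b" "b \<le> 1"
  shows "(\<integral>z. indicator S (z 1) * (b * w (z 1) / (\<Sum>i\<in>{1..N}. w (z i)) + (1 - b) * w (z 1) / (\<Sum>i\<in>{1..N+1}. w (z i)))^2 \<partial>PiM {1..N+1} PF) \<le> Dn N"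
proof -
  define E where "E = {z \<in> space (PiM {1..N+1} PF). (\<Sum>i\<in>{2..N}. w (z i)) \<le> real (N - 1) / 2}"
  have "(\<integral>z. indicator S (z 1) * (b * w (z 1) / (\<Sum>i\<in>{1..N}. w (z i)) + (1 - b) * w (z 1) / (\<Sum>i\<in>{1..N+1}. w (z i)))^2 \<partial>PiM {1..N+1} PF)
     \<le> (\<integral>z. indicator E z + 4*W^2/(real (N - 1))^2 \<partial>PiM {1..N+1} PF)"
  proof (rule integral_mono')
    show "integrable (PiM {1..N+1} PF) (\<lambda>z. indicator E z + 4*W^2/(real (N - 1))^2)"
      unfolding E_def by (rule Bf_int[OF N])
    fix z assume "z \<in> space (PiM {1..N+1} PF)"
    from ptw_space(2)[OF N this b] show "indicator S (z 1) * (b * w (z 1) / (\<Sum>i\<in>{1..N}. w (z i)) + (1 - b) * w (z 1) / (\<Sum>i\<in>{1..N+1}. w (z i)))^2 \<le> indicator E z + 4*W^2/(real (N - 1))^2"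
      unfolding E_def by simp
    show "0 \<le> indicator E z + 4*W^2/(real (N - 1))^2" by simp
  qed
  also have "\<dots> \<le> Dn N" unfolding E_def by (rule Bf_int[OF N])
  finally show ?thesis .
qed

lemma f_bnd:
  assumes "K \<ge> 1" "K \<le> L" "z \<in> space (PiM {1..L} PF)"
  shows "0 \<le> indicator S (z 1) * (w (z 1) / (\<Sum>i\<in>{1..K}. w (z i))) \<and> indicator S (z 1) * (w (z 1) / (\<Sum>i\<in>{1..K}. w (z i))) \<le> 1"
proof -
  have zs: "i \<in> {1..L} \<Longrightarrow> z i \<in> space M" for i using space_PP[OF assms(3)] by auto
  have "w (z 1) \<le> (\<Sum>i\<in>{1..K}. w (z i))"
    using assms by (intro member_le_sum w_nn zs) auto
  moreover have "0 \<le> w (z 1)" using assms by (intro w_nn zs) auto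
  ultimately have "0 \<le> w (z 1) / (\<Sum>i\<in>{1..K}. w (z i))" "w (z 1) / (\<Sum>i\<in>{1..K}. w (z i)) \<le> 1"
    by (auto simp: divide_le_eq_1)
  then show ?thesis by (auto simp: indicator_def)
qed

lemma beta_bnd: "0 < beta l" "beta l \<le> 1"
  unfolding beta_def by linarith+

lemma eps_s_ge:
  assumes l: "l \<ge> 1"
  shows "(eps_lam M p q l)^2 \<le> eps_s M p q l"
proof -
  define N where "N = nat \<lfloor>l\<rfloor>"
  define b where "b = beta l"
  have N: "N \<ge> 1" unfolding N_def using l by linarith
  have b: "0 \<le> b" "b \<le> 1" using beta_bnd[of l] by (auto simp: b_def)
  let ?M = "PiM {1..N+1} PF"
  define f1 where "f1 = (\<lambda>z. indicator S (z 1) * (w (z 1) / (\<Sum>i\<in>{1..N}. w (z i))) :: real)"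
  define f2 where "f2 = (\<lambda>z. indicator S (z 1) * (w (z 1) / (\<Sum>i\<in>{1..N+1}. w (z i))) :: real)"
  define X where "X = (\<lambda>z. b * f1 z + (1 - b) * f2 z)"
  have i1: "integrable ?M f1" unfolding f1_def by (rule f_int) (use N in auto)
  have i2: "integrable ?M f2" unfolding f2_def by (rule f_int) (use N in auto)
  have iX: "integrable ?M X" unfolding X_def using i1 i2 by (intro Bochner_Integration.integrable_add integrable_mult_right)
  have Xb: "\<bar>X z\<bar> \<le> 1" if z: "z \<in> space ?M" for z
  proof -
    have "0 \<le> f1 z" "f1 z \<le> 1" using f_bnd[of N "N+1" z] N z unfolding f1_def by auto
    moreover have "0 \<le> f2 z" "f2 z \<le> 1" using f_bnd[of "N+1" "N+1" z] N z unfolding f2_def by auto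
    ultimately have "0 \<le> X z" "X z \<le> 1" unfolding X_def using b
      by (auto intro!: add_nonneg_nonneg mult_nonneg_nonneg convex_bound_le)
    then show ?thesis by simp
  qed
  have iX2: "integrable ?M (\<lambda>z. (X z)^2)"
  proof (rule int_bdd[where B=1, OF PP_prob])
    show "(\<lambda>z. (X z)^2) \<in> borel_measurable ?M" using borel_measurable_integrable[OF iX] by measurable
    fix z assume "z \<in> space ?M"
    from power_mono[OF Xb[OF this] abs_ge_zero, of 2] show "\<bar>(X z)^2\<bar> \<le> 1" by simp
  qed
  have "integral\<^sup>L ?M X = b * integral\<^sup>L ?M f1 + (1 - b) * integral\<^sup>L ?M f2"
    unfolding X_def using i1 i2 by (simp add: Bochner_Integration.integral_add)
  also have "integral\<^sup>L ?M f1 = eps_N M p q N" unfolding f1_def by (rule marg) (use N in auto)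
  also have "integral\<^sup>L ?M f2 = eps_N M p q (N+1)" unfolding f2_def by (rule marg) (use N in auto)
  finally have eX: "integral\<^sup>L ?M X = eps_lam M p q l"
    unfolding eps_lam_def N_def b_def by simp
  have "eps_s M p q l = (\<integral>z. (X z)^2 \<partial>?M)"
    unfolding eps_s_def N_def[symmetric] b_def[symmetric]
  proof (rule Bochner_Integration.integral_cong[OF refl])
    fix z
    show "indicator S (z 1) * (b * w (z 1) / (\<Sum>i\<in>{1..N}. w (z i)) + (1 - b) * w (z 1) / (\<Sum>j\<in>{1..N+1}. w (z j)))^2 = (X z)^2"
      unfolding X_def f1_def f2_def by (auto simp: indicator_def power2_eq_square)
  qed
  moreover have "(integral\<^sup>L ?M X)^2 \<le> (\<integral>z. (X z)^2 \<partial>?M)"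
    by (rule sq_int_le[OF PP_prob iX iX2])
  ultimately show ?thesis using eX by simp
qed

lemma eN1: "eps_N M p q 1 = 1"
proof -
  interpret PPr: prob_space P by (rule P_prob)
  have "eps_N M p q 1 = (\<integral>z. eps_z M p q 1 z \<partial>P)" by (rule eN_alt)
  also have "\<dots> = (\<integral>z. 1 \<partial>P)"
  proof (rule integral_cong_AE)
    show "AE x in P. eps_z M p q 1 x = 1"
      using AE_S
    proof eventually_elim
      case (elim x)
      then have "0 < w x" by (auto simp: supp_def w_pos)
      then show ?case unfolding eps_z_def
        using prob_space.prob_space[OF QQ_prob, of "{}"] by simp
    qed
  qed auto
  also have "\<dots> = 1" using PPr.prob_space by simp
  finally show ?thesis .
qed

lemma eN2: "eps_N M p q 2 \<le> 1 - 1 / (2 * W)"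
proof -
  interpret PPr: prob_space P by (rule P_prob)
  have W0: "0 < W" using W_ge1 by simp
  have ez: "eps_z M p q 2 x \<le> 1 - 1 / (2 * W)" if x: "x \<in> S" for x
  proof -
    let ?Q = "PiM {2::nat} (\<lambda>_. Q)"
    interpret QQr: prob_space ?Q by (rule QQ_prob)
    have xs: "x \<in> space M" "0 < w x" "w x \<le> W" using x w_le[of x] by (auto simp: supp_def w_pos)
    have iw: "integrable ?Q (\<lambda>z. w (z 2))"
      by (rule int_bdd[where B=W, OF QQ_prob]) (auto simp: w_nn w_le space_QQ abs_le_iff intro: order_trans[OF _ w_nn])
    have "eps_z M p q 2 x = (\<integral>z. w x / (w x + w (z 2)) \<partial>?Q)" unfolding eps_z_def by simp
    also have "\<dots> \<le> (\<integral>z. 1 - w (z 2) / (2 * W) \<partial>?Q)"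
    proof (rule integral_mono)
      show "integrable ?Q (\<lambda>z. 1 - w (z 2) / (2 * W))"
        using iw by (intro Bochner_Integration.integrable_diff QQr.integrable_const integrable_divide)
      show "integrable ?Q (\<lambda>z. w x / (w x + w (z 2)))"
      proof (rule int_bdd[where B=1, OF QQ_prob])
        fix z assume z: "z \<in> space ?Q"
        have "0 \<le> w (z 2)" using space_QQ[OF z] w_nn by auto
        then show "\<bar>w x / (w x + w (z 2))\<bar> \<le> 1" using xs by (simp add: abs_le_iff)
      qed measurable
      fix z assume z: "z \<in> space ?Q"
      have t: "0 \<le> w (z 2)" "w (z 2) \<le> W" using space_QQ[OF z] w_nn w_le by auto
      have "w (z 2) / (2 * W) \<le> w (z 2) / (w x + w (z 2))"
        using t xs by (intro divide_left_mono) auto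
      also have "w (z 2) / (w x + w (z 2)) = 1 - w x / (w x + w (z 2))"
        using t xs by (simp add: field_simps)
      finally show "w x / (w x + w (z 2)) \<le> 1 - w (z 2) / (2 * W)" by simp
    qed
    also have "\<dots> = 1 - (\<integral>z. w (z 2) \<partial>?Q) / (2 * W)"
      using iw by (simp add: Bochner_Integration.integral_diff QQr.prob_space)
    also have "(\<integral>z. w (z 2) \<partial>?Q) = 1" by (simp add: comp_int int_wQ)
    finally show ?thesis .
  qed
  have "eps_N M p q 2 = (\<integral>z. eps_z M p q 2 z \<partial>P)" by (rule eN_alt)
  also have "\<dots> \<le> (\<integral>z. 1 - 1 / (2 * W) \<partial>P)"
  proof (rule integral_mono_AE)
    show "integrable P (eps_z M p q 2)"
      by (rule int_bdd[where B=1, OF P_prob]) (use ez_bnd in \<open>auto simp: abs_le_iff\<close>)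
    show "AE x in P. eps_z M p q 2 x \<le> 1 - 1 / (2 * W)"
      using AE_S by eventually_elim (rule ez)
  qed simp
  also have "\<dots> = 1 - 1 / (2 * W)" using PPr.prob_space by simp
  finally show ?thesis .
qed

lemma floor_facts: assumes "l \<ge> 1" shows "nat \<lfloor>l\<rfloor> \<ge> 1" "real (nat \<lfloor>l\<rfloor>) = real_of_int \<lfloor>l\<rfloor>"
  "beta l = real (nat \<lfloor>l\<rfloor>) + 1 - l" "l < real (nat \<lfloor>l\<rfloor>) + 1" "real (nat \<lfloor>l\<rfloor>) \<le> l"
  using assms unfolding beta_def by linarith+

lemma eps_lam_lower:
  assumes l: "l \<ge> 1"
  shows "1 / l \<le> eps_lam M p q l"
proof -
  define N where "N = nat \<lfloor>l\<rfloor>"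
  define b where "b = beta l"
  note ff = floor_facts[OF l, folded N_def b_def]
  have b: "0 \<le> b" "b \<le> 1" using beta_bnd[of l] by (auto simp: b_def)
  have Nr: "real N \<ge> 1" using ff(1) by simp
  have lb: "l = real N + 1 - b" using ff by simp
  have "b / real N + (1 - b) / (real N + 1) \<le> eps_lam M p q l"
  proof -
    have "b * (1 / real N) \<le> b * eps_N M p q N" using eN_lower[of N] ff b by (intro mult_left_mono) auto
    then have t1: "b / real N \<le> b * eps_N M p q N" by simp
    have "(1 - b) * (1 / real (N+1)) \<le> (1 - b) * eps_N M p q (N+1)" using eN_lower[of "N+1"] b by (intro mult_left_mono) auto
    then have t2: "(1 - b) / (real N + 1) \<le> (1 - b) * eps_N M p q (N+1)" by (simp add: add.commute)
    have "eps_lam M p q l = b * eps_N M p q N + (1 - b) * eps_N M p q (N+1)"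
      unfolding eps_lam_def N_def b_def by simp
    then show ?thesis using t1 t2 by linarith
  qed
  moreover have "1 / l \<le> b / real N + (1 - b) / (real N + 1)"
  proof -
    have e: "b / real N + (1 - b) / (real N + 1) = (real N + b) / (real N * (real N + 1))"
      using Nr by (simp add: field_simps)
    have "real N * (real N + 1) \<le> (real N + b) * l"
    proof -
      have "(real N + b) * l - real N * (real N + 1) = b * (1 - b)" unfolding lb by (simp add: algebra_simps)
      moreover have "0 \<le> b * (1 - b)" using b by simp
      ultimately show ?thesis by linarith
    qed
    then have "1 / l * (real N * (real N + 1)) \<le> 1 / l * ((real N + b) * l)"
      using l by (intro mult_left_mono) auto
    also have "\<dots> = real N + b" using l by simp
    finally have "1 / l * (real N * (real N + 1)) \<le> real N + b" .
    moreover have pos: "0 < real N * (real N + 1)" using Nr by simp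
    ultimately show ?thesis unfolding e by (simp add: le_divide_eq)
  qed
  ultimately show ?thesis by linarith
qed

lemma exists_big:
  assumes a: "a \<ge> 0" and b: "b > 0"
  obtains X0 where "\<And>x. x \<ge> X0 \<Longrightarrow> (b + 2*a + 2*b*(x+1)) * (exp (- (x - 1) / (2 * W^2)) + 4*W^2/(x-1)^2) < b / 2"
proof -
  have W0: "W > 0" using W_ge1 by simp
  have "((\<lambda>x::real. (b + 2*a + 2*b*(x+1)) * (exp (- (x - 1) / (2 * W^2)) + 4*W^2/(x-1)^2)) \<longlongrightarrow> 0) at_top"
    using big_lim[OF W0] .
  then have "eventually (\<lambda>x. (b + 2*a + 2*b*(x+1)) * (exp (- (x - 1) / (2 * W^2)) + 4*W^2/(x-1)^2) < b / 2) at_top"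
    using b by (intro order_tendstoD(2)) auto
  then show ?thesis using that by (auto simp: eventually_at_top_linorder)
qed

lemma ev_top:
  assumes a: "a \<ge> 0" and b: "b > 0"
  shows "eventually (\<lambda>l. b / 2 \<le> b * (1 - eps_s M p q l) + 2 * (a + b * l) * eps_deriv M p q l) at_top"
proof -
  obtain X0 where X0: "\<And>x. x \<ge> X0 \<Longrightarrow> (b + 2*a + 2*b*(x+1)) * (exp (- (x - 1) / (2 * W^2)) + 4*W^2/(x-1)^2) < b / 2"
    using exists_big[OF a b] by blast
  show ?thesis unfolding eventually_at_top_linorder
  proof (intro exI allI impI)
    fix l assume l: "l \<ge> max (X0 + 1) 3"
    define N where "N = nat \<lfloor>l\<rfloor>"
    have l1: "l \<ge> 1" using l by simp
    note ff = floor_facts[OF l1, folded N_def]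
    have N2: "N \<ge> 2" using l unfolding N_def by linarith
    have NX: "real N \<ge> X0" using l ff(4) by linarith
    define D where "D = Dn N"
    have D0: "0 \<le> D" unfolding D_def Dn_def by simp
    have Deq: "D = exp (- (real N - 1) / (2 * W^2)) + 4*W^2/(real N - 1)^2"
      using N2 unfolding D_def Dn_def by (simp add: of_nat_diff)
    have g: "(b + 2*a + 2*b*(real N + 1)) * D < b / 2" using X0[OF NX] unfolding Deq .
    have es: "eps_s M p q l \<le> D"
      unfolding eps_s_def D_def N_def using es_bound[of "nat \<lfloor>l\<rfloor>" "beta l"] N2 beta_bnd[of l] unfolding N_def by simp
    have ed: "- D \<le> eps_deriv M p q l"
      unfolding eps_deriv_def D_def N_def using diff_bound[of "nat \<lfloor>l\<rfloor>"] N2 unfolding N_def by simp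
    have "0 \<le> b * l" using b l1 by simp
    then have al1: "0 \<le> a + b * l" using a by simp
    have "b * l \<le> b * (real N + 1)" using b ff(4) by (intro mult_left_mono) auto
    then have al: "0 \<le> a + b * l" "a + b * l \<le> a + b * (real N + 1)" using al1 by auto
    have "b * (1 - eps_s M p q l) \<ge> b * (1 - D)" using es b by (intro mult_left_mono) auto
    moreover have "2 * (a + b * l) * eps_deriv M p q l \<ge> 2 * (a + b * l) * (- D)"
      using ed al by (intro mult_left_mono) auto
    moreover have "(a + b * l) * D \<le> (a + b * (real N + 1)) * D" using al D0 by (intro mult_right_mono) auto
    ultimately have "b * (1 - eps_s M p q l) + 2 * (a + b * l) * eps_deriv M p q l \<ge> b - (b + 2*a + 2*b*(real N + 1)) * D"
      by (simp add: algebra_simps)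
    then show "b / 2 \<le> b * (1 - eps_s M p q l) + 2 * (a + b * l) * eps_deriv M p q l" using g by linarith
  qed
qed

lemma ev_right:
  assumes a: "a \<ge> 0" and b: "b > 0"
  shows "eventually (\<lambda>l. b * (1 - l powi (-2)) + 2 * (a + b * l) * eps_deriv M p q l \<le> - b / (2 * W)) (at_right 1)"
proof -
  have W0: "W > 0" using W_ge1 by simp
  have "((\<lambda>l::real. b * (1 - l powi (-2))) \<longlongrightarrow> b * (1 - 1 powi (-2))) (at_right 1)"
    by (intro tendsto_intros) auto
  then have "((\<lambda>l::real. b * (1 - l powi (-2))) \<longlongrightarrow> 0) (at_right 1)" by simp
  then have ev1: "eventually (\<lambda>l. b * (1 - l powi (-2)) < b / (2 * W)) (at_right (1::real))"
    using b W0 by (intro order_tendstoD(2)) auto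
  have ev2: "eventually (\<lambda>l. l < (2::real)) (at_right 1)"
    by (simp add: eventually_at_right_field) (auto intro: exI[of _ 2])
  have ev3: "eventually (\<lambda>l. l > (1::real)) (at_right 1)"
    by (simp add: eventually_at_right_field) (auto intro: exI[of _ 2])
  show ?thesis using ev1 ev2 ev3
  proof eventually_elim
    case (elim l)
    have fl: "nat \<lfloor>l\<rfloor> = 1" using elim by linarith
    have ed: "eps_deriv M p q l \<le> - 1 / (2 * W)"
      unfolding eps_deriv_def fl using eN1 eN2 by (simp add: numeral_2_eq_2)
    have "(a + b * l) * eps_deriv M p q l \<le> (a + b * l) * (- 1 / (2 * W))"
      using ed a b elim by (intro mult_left_mono) auto
    also have "\<dots> \<le> b * (- 1 / (2 * W))"
    proof (rule mult_right_mono_neg)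
      have "b * 1 \<le> b * l" using b elim by (intro mult_left_mono) auto
      then show "b \<le> a + b * l" using a by simp
      show "- 1 / (2 * W) \<le> 0" using W0 by simp
    qed
    finally have "2 * (a + b * l) * eps_deriv M p q l \<le> - b / W" using W0 by (simp add: field_simps)
    moreover have "- b / W + b / (2 * W) = - b / (2 * W)" using W0 by (simp add: field_simps)
    ultimately show ?case using elim(1) by linarith
  qed
qed

end

theorem main_result:
  fixes M :: "'a measure" and p q :: "'a \<Rightarrow> real" and a b :: real
    and h1 h2 h3 :: "real \<Rightarrow> real"
  assumes "sigma_finite_measure M"
    and "p \<in> borel_measurable M" and "q \<in> borel_measurable M"
    and "\<And>x. x \<in> space M \<Longrightarrow> p x \<ge> 0" and "\<And>x. x \<in> space M \<Longrightarrow> q x \<ge> 0"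
    and "(\<integral>\<^sup>+ x. ennreal (p x) \<partial>M) = 1" and "(\<integral>\<^sup>+ x. ennreal (q x) \<partial>M) = 1"
    and "\<And>x. x \<in> space M \<Longrightarrow> p x > 0 \<Longrightarrow> q x > 0"
    and "bdd_above (wgt p q ` space M)"
    and a: "a \<ge> 0" and b: "b > 0"
    and h1: "h1 = (\<lambda>l. b * (1 - l powi (-2)) + 2 * (a + b * l) * eps_deriv M p q l)"
    and h2: "h2 = (\<lambda>l. b * (1 - (eps_lam M p q l)\<^sup>2) + 2 * (a + b * l) * eps_deriv M p q l)"
    and h3: "h3 = (\<lambda>l. b * (1 - eps_s M p q l) + 2 * (a + b * l) * eps_deriv M p q l)"
  shows "(\<forall>l\<ge>1. h3 l \<le> h2 l \<and> h2 l \<le> h1 l)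
    \<and> (\<forall>h\<in>{h1, h2, h3}.
         Liminf at_top (\<lambda>l. ereal (h l)) > 0 \<and> Limsup (at_right 1) (\<lambda>l. ereal (h l)) < 0)"
proof -
  interpret wset M p q by unfold_locales (use assms in auto)
  have W0: "W > 0" using W_ge1 by simp
  have ord: "h3 l \<le> h2 l \<and> h2 l \<le> h1 l" if l: "l \<ge> 1" for l
  proof
    show "h3 l \<le> h2 l" unfolding h2 h3 using eps_s_ge[OF l] b by (simp add: mult_left_mono)
    have "1 / l \<le> eps_lam M p q l" by (rule eps_lam_lower[OF l])
    then have "(1 / l)^2 \<le> (eps_lam M p q l)^2" using l by (intro power_mono) auto
    moreover have "l powi (-2) = (1 / l)^2" by (simp add: power_int_minus power_divide inverse_eq_divide)
    ultimately show "h2 l \<le> h1 l" unfolding h1 h2 using b by (simp add: mult_left_mono)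
  qed
  have evt: "eventually (\<lambda>l. b / 2 \<le> h l) at_top" if h: "h \<in> {h1, h2, h3}" for h
  proof -
    have "eventually (\<lambda>l. b / 2 \<le> h3 l \<and> l \<ge> 1) at_top"
      using ev_top[OF a b] eventually_ge_at_top[of "1::real"] unfolding h3 by eventually_elim auto
    then show ?thesis
    proof eventually_elim
      case (elim l)
      then have "b / 2 \<le> h3 l" "h3 l \<le> h2 l" "h2 l \<le> h1 l" using ord by auto
      then have "b / 2 \<le> h1 l" "b / 2 \<le> h2 l" "b / 2 \<le> h3 l" by linarith+
      then show ?case using h by blast
    qed
  qed
  have evr: "eventually (\<lambda>l. h l \<le> - b / (2 * W)) (at_right 1)" if h: "h \<in> {h1, h2, h3}" for h
  proof -
    have ev3: "eventually (\<lambda>l. l > (1::real)) (at_right 1)"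
      by (simp add: eventually_at_right_field) (auto intro: exI[of _ 2])
    have "eventually (\<lambda>l. h1 l \<le> - b / (2 * W) \<and> l > 1) (at_right 1)"
      using ev_right[OF a b] ev3 unfolding h1 by eventually_elim auto
    then show ?thesis
    proof eventually_elim
      case (elim l)
      then have "h1 l \<le> - b / (2 * W)" "h3 l \<le> h2 l" "h2 l \<le> h1 l" using ord by auto
      then have "h1 l \<le> - b / (2 * W)" "h2 l \<le> - b / (2 * W)" "h3 l \<le> - b / (2 * W)" by linarith+
      then show ?case using h by blast
    qed
  qed
  have "Liminf at_top (\<lambda>l. ereal (h l)) > 0 \<and> Limsup (at_right 1) (\<lambda>l. ereal (h l)) < 0" if h: "h \<in> {h1, h2, h3}" for h
  proof
    have "ereal (b / 2) \<le> Liminf at_top (\<lambda>l. ereal (h l))"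
      by (rule Liminf_bounded) (use evt[OF h] in \<open>auto elim: eventually_mono\<close>)
    moreover have "(0::ereal) < ereal (b / 2)" using b by simp
    ultimately show "Liminf at_top (\<lambda>l. ereal (h l)) > 0" by (rule order.strict_trans2[rotated])
    have "Limsup (at_right 1) (\<lambda>l. ereal (h l)) \<le> ereal (- b / (2 * W))"
      by (rule Limsup_bounded) (use evr[OF h] in \<open>auto elim: eventually_mono\<close>)
    moreover have "- b / (2 * W) < 0" using b W0 by (simp add: divide_neg_pos)
    then have "ereal (- b / (2 * W)) < 0" by simp
    ultimately show "Limsup (at_right 1) (\<lambda>l. ereal (h l)) < 0" by (rule order.strict_trans1)
  qed
  then show ?thesis using ord by auto
qed


theorem proposition5p2:
  fixes M :: "'a measure" and p q :: "'a \<Rightarrow> real" and a b :: real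
    and h1 h2 h3 :: "real \<Rightarrow> real"
  assumes "sigma_finite_measure M"
    and "p \<in> borel_measurable M" and "q \<in> borel_measurable M"
    and "\<And>x. x \<in> space M \<Longrightarrow> p x \<ge> 0" and "\<And>x. x \<in> space M \<Longrightarrow> q x \<ge> 0"
    and "(\<integral>\<^sup>+ x. ennreal (p x) \<partial>M) = 1" and "(\<integral>\<^sup>+ x. ennreal (q x) \<partial>M) = 1"
    and "\<And>x. x \<in> space M \<Longrightarrow> p x > 0 \<Longrightarrow> q x > 0"
    and "bdd_above (wgt p q ` space M)"
    and "a \<ge> 0" and "b > 0"
    and "h1 = (\<lambda>l. b * (1 - l powi (-2)) + 2 * (a + b * l) * eps_deriv M p q l)"
    and "h2 = (\<lambda>l. b * (1 - (eps_lam M p q l)\<^sup>2) + 2 * (a + b * l) * eps_deriv M p q l)"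
    and "h3 = (\<lambda>l. b * (1 - eps_s M p q l) + 2 * (a + b * l) * eps_deriv M p q l)"
  shows "(\<forall>l\<ge>1. h3 l \<le> h2 l \<and> h2 l \<le> h1 l)
    \<and> (\<forall>h\<in>{h1, h2, h3}.
         Liminf at_top (\<lambda>l. ereal (h l)) > 0 \<and> Limsup (at_right 1) (\<lambda>l. ereal (h l)) < 0)"
  using assms by (rule main_result)

end
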